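(* Let $H$ be a connected simple matroid of rank $3$ and let $a,b\in E(H)$ (possibly $a=b$). Then there is a $4$-element circuit of $H$ containing $a$ and $b$, or $H$ is the parallel connection of two lines with base point $a$ or with base point $b$.
   Context: A line is a rank-$2$ flat; the parallel connection is the usual matroid parallel connection along a common base point. *)

theory Defs
  imports Main
begin

definition matroid :: "'a set \<Rightarrow> ('a set \<Rightarrow> bool) \<Rightarrow> bool" where
  "matroid E indep \<longleftrightarrow>
     finite E \<and> indep {} \<and>
     (\<forall>X. indep X \<longrightarrow> X \<subseteq> E) \<and>
     (\<forall>X Y. indep Y \<and> X \<subseteq> Y \<longrightarrow> indep X) \<and>
     (\<forall>X Y. indep X \<and> indep Y \<and> card X < card Y \<longrightarrow>
        (\<exists>y \<in> Y - X. indep (insert y X)))"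

definition mrank :: "('a set \<Rightarrow> bool) \<Rightarrow> 'a set \<Rightarrow> nat" where
  "mrank indep X = Max {card I | I. I \<subseteq> X \<and> indep I}"

definition circuit :: "'a set \<Rightarrow> ('a set \<Rightarrow> bool) \<Rightarrow> 'a set \<Rightarrow> bool" where
  "circuit E indep C \<longleftrightarrow> C \<subseteq> E \<and> \<not> indep C \<and> (\<forall>x \<in> C. indep (C - {x}))"

text \<open>Simple: no loops and no parallel pairs, i.e. no circuits with at most two elements.\<close>
definition simple_matroid :: "'a set \<Rightarrow> ('a set \<Rightarrow> bool) \<Rightarrow> bool" where
  "simple_matroid E indep \<longleftrightarrow> (\<forall>C. circuit E indep C \<longrightarrow> card C \<ge> 3)"

definition connected_matroid :: "'a set \<Rightarrow> ('a set \<Rightarrow> bool) \<Rightarrow> bool" where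
  "connected_matroid E indep \<longleftrightarrow>
     (\<forall>e \<in> E. \<forall>f \<in> E. e \<noteq> f \<longrightarrow> (\<exists>C. circuit E indep C \<and> e \<in> C \<and> f \<in> C))"

definition flat :: "'a set \<Rightarrow> ('a set \<Rightarrow> bool) \<Rightarrow> 'a set \<Rightarrow> bool" where
  "flat E indep X \<longleftrightarrow> X \<subseteq> E \<and> (\<forall>e \<in> E - X. mrank indep (insert e X) > mrank indep X)"

definition line :: "'a set \<Rightarrow> ('a set \<Rightarrow> bool) \<Rightarrow> 'a set \<Rightarrow> bool" where
  "line E indep L \<longleftrightarrow> flat E indep L \<and> mrank indep L = 2"

definition restr :: "('a set \<Rightarrow> bool) \<Rightarrow> 'a set \<Rightarrow> 'a set \<Rightarrow> bool" where
  "restr indep L = (\<lambda>X. indep X \<and> X \<subseteq> L)"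

text \<open>Circuits of the parallel connection P(M1,M2) of matroids M1 on E1, M2 on E2 with
  E1 \<inter> E2 = {p}, p neither a loop nor a coloop (Oxley, Prop. 7.1.13): circuits of M1,
  circuits of M2, and sets (C1 - p) \<union> (C2 - p) with p \<in> C1, C2 circuits of M1, M2.\<close>
definition pc_circuits ::
  "'a set \<Rightarrow> ('a set \<Rightarrow> bool) \<Rightarrow> 'a set \<Rightarrow> ('a set \<Rightarrow> bool) \<Rightarrow> 'a \<Rightarrow> 'a set set" where
  "pc_circuits E1 I1 E2 I2 p =
     {C. circuit E1 I1 C} \<union> {C. circuit E2 I2 C} \<union>
     {(C1 - {p}) \<union> (C2 - {p}) | C1 C2. circuit E1 I1 C1 \<and> circuit E2 I2 C2 \<and> p \<in> C1 \<and> p \<in> C2}"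

definition parallel_connection_of_two_lines :: "'a set \<Rightarrow> ('a set \<Rightarrow> bool) \<Rightarrow> 'a \<Rightarrow> bool" where
  "parallel_connection_of_two_lines E indep p \<longleftrightarrow>
     (\<exists>L1 L2. line E indep L1 \<and> line E indep L2 \<and> L1 \<inter> L2 = {p} \<and> L1 \<union> L2 = E \<and>
        {C. circuit E indep C} = pc_circuits L1 (restr indep L1) L2 (restr indep L2) p)"

end

theory Submission
  imports Defs
begin

locale rk3 =
  fixes E :: "'a set" and indep :: "'a set \<Rightarrow> bool"
  assumes M: "matroid E indep" and S: "simple_matroid E indep" and R: "mrank indep E = 3"
begin

lemma fin: "finite E" using M unfolding matroid_def by blast
lemma indep_E: "indep X \<Longrightarrow> X \<subseteq> E" using M unfolding matroid_def by blast
lemma mono: "indep Y \<Longrightarrow> X \<subseteq> Y \<Longrightarrow> indep X" using M unfolding matroid_def by blast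
lemma aug: "indep X \<Longrightarrow> indep Y \<Longrightarrow> card X < card Y \<Longrightarrow> \<exists>y\<in>Y-X. indep (insert y X)"
  using M unfolding matroid_def by blast
lemma indep_empty: "indep {}" using M unfolding matroid_def by blast

lemma finS: "finite {card I |I. I \<subseteq> X \<and> indep I}"
proof -
  have "{card I |I. I \<subseteq> X \<and> indep I} \<subseteq> card ` Pow E" using indep_E by auto
  thus ?thesis using fin by (meson finite_Pow_iff finite_imageI finite_subset)
qed

lemma card_le3: assumes "indep I" shows "card I \<le> 3"
proof -
  have "card I \<in> {card I |I. I \<subseteq> E \<and> indep I}" using assms indep_E by auto
  hence "card I \<le> Max {card I |I. I \<subseteq> E \<and> indep I}" using Max_ge[OF finS] by blast
  thus ?thesis using R unfolding mrank_def by simp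
qed

lemma ex3: "\<exists>I. I \<subseteq> E \<and> indep I \<and> card I = 3"
proof -
  have ne: "{card I |I. I \<subseteq> E \<and> indep I} \<noteq> {}" using indep_empty by auto
  have "Max {card I |I. I \<subseteq> E \<and> indep I} \<in> {card I |I. I \<subseteq> E \<and> indep I}"
    using Max_in[OF finS ne] .
  hence "3 \<in> {card I |I. I \<subseteq> E \<and> indep I}" using R unfolding mrank_def by simp
  thus ?thesis by auto
qed

lemma indep1: "x \<in> E \<Longrightarrow> indep {x}"
proof (rule ccontr)
  assume a: "x \<in> E" "\<not> indep {x}"
  hence "circuit E indep {x}" unfolding circuit_def using indep_empty by auto
  hence "card {x} \<ge> 3" using S unfolding simple_matroid_def by blast
  thus False by simp
qed

lemma indep2: assumes "x \<in> E" "y \<in> E" shows "indep {x,y}"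
proof (cases "x = y")
  case True thus ?thesis using indep1 assms by simp
next
  case False
  show ?thesis
  proof (rule ccontr)
    assume a: "\<not> indep {x,y}"
    have "\<forall>z\<in>{x,y}. indep ({x,y}-{z})" using indep1 False assms by (auto simp: insert_Diff_if)
    hence "circuit E indep {x,y}" unfolding circuit_def using a assms by auto
    hence "card {x,y} \<ge> 3" using S unfolding simple_matroid_def by blast
    thus False using False by simp
  qed
qed

definition ln where "ln x y = {z\<in>E. z = x \<or> z = y \<or> \<not> indep {x,y,z}}"

lemma ln_sym: "ln x y = ln y x" unfolding ln_def by (auto simp: insert_commute)
lemma ln_E: "ln x y \<subseteq> E" unfolding ln_def by auto
lemma ln_x: "x \<in> E \<Longrightarrow> x \<in> ln x y" unfolding ln_def by auto
lemma ln_y: "y \<in> E \<Longrightarrow> y \<in> ln x y" unfolding ln_def by auto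
lemma in_ln: "z \<in> E \<Longrightarrow> \<not> indep {x,y,z} \<Longrightarrow> z \<in> ln x y" unfolding ln_def by auto
lemma not_ln: "z \<in> E \<Longrightarrow> z \<notin> ln x y \<Longrightarrow> indep {x,y,z}" unfolding ln_def by auto
lemma ln_dep: "z \<in> ln x y \<Longrightarrow> z \<noteq> x \<Longrightarrow> z \<noteq> y \<Longrightarrow> \<not> indep {x,y,z}" unfolding ln_def by auto

lemma exch:
  assumes "\<not> indep {x,y,z}" "\<not> indep {x,y,w}" "x\<noteq>y" "z\<noteq>w" "z\<noteq>x" "z\<noteq>y" "w\<noteq>x" "w\<noteq>y"
    "x\<in>E" "y\<in>E"
  shows "\<not> indep {x,z,w}"
proof
  assume i: "indep {x,z,w}"
  have c3: "card {x,z,w} = 3" using assms by auto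
  have c2: "card {x,y} = 2" using assms by auto
  from aug[OF indep2[OF \<open>x\<in>E\<close> \<open>y\<in>E\<close>] i] c2 c3
  obtain e where e: "e \<in> {x,z,w} - {x,y}" "indep (insert e {x,y})" by auto
  have "insert e {x,y} = {x,y,e}" by auto
  moreover have "e = z \<or> e = w" using e by auto
  ultimately show False using e assms by auto
qed

lemma ln_sub:
  assumes "x\<noteq>y" "x\<in>E" "y\<in>E" "u \<in> ln x y" "u\<noteq>x"
  shows "ln x y \<subseteq> ln x u"
proof
  fix z assume z: "z \<in> ln x y"
  have uE: "u \<in> E" and zE: "z \<in> E" using z assms ln_E by auto
  show "z \<in> ln x u"
  proof (cases "z = x \<or> z = u")
    case True thus ?thesis using zE unfolding ln_def by auto
  next
    case zn: False
    show ?thesis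
    proof (cases "u = y")
      case True thus ?thesis using z by simp
    next
      case uy: False
      have du: "\<not> indep {x,y,u}" using ln_dep assms uy by blast
      show ?thesis
      proof (cases "z = y")
        case True
        hence "\<not> indep {x,u,z}" using du by (simp add: insert_commute)
        thus ?thesis using in_ln zE by blast
      next
        case False
        have dz: "\<not> indep {x,y,z}" using ln_dep z zn False by blast
        have "\<not> indep {x,u,z}" by (rule exch[OF du dz]) (use assms zn False uy in auto)
        thus ?thesis using in_ln zE by blast
      qed
    qed
  qed
qed

lemma ln_eq:
  assumes "x\<noteq>y" "x\<in>E" "y\<in>E" "u \<in> ln x y" "u\<noteq>x"
  shows "ln x u = ln x y"
proof (cases "u = y")
  case True thus ?thesis by simp
next
  case False
  have uE: "u \<in> E" using assms ln_E by auto
  have "\<not> indep {x,y,u}" using ln_dep assms False by blast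
  hence "\<not> indep {x,u,y}" by (simp add: insert_commute)
  hence "y \<in> ln x u" using in_ln assms by blast
  hence "ln x u \<subseteq> ln x y" using ln_sub[of x u y] assms uE by auto
  thus ?thesis using ln_sub[OF assms] by auto
qed

lemma ln_eq2:
  assumes "x\<noteq>y" "x\<in>E" "y\<in>E" "u \<in> ln x y" "v \<in> ln x y" "u\<noteq>v"
  shows "ln u v = ln x y"
proof (cases "u = x")
  case True thus ?thesis using ln_eq[of x y v] assms by auto
next
  case False
  have 1: "ln x u = ln x y" using ln_eq assms False by blast
  have uE: "u \<in> E" using assms ln_E by auto
  have vux: "v \<in> ln u x" using assms 1 ln_sym by auto
  show ?thesis
  proof (cases "v = x")
    case True thus ?thesis using 1 ln_sym by auto
  next
    case vx: False
    have "ln u v = ln u x" using ln_eq[of u x v] uE assms False vux by auto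
    thus ?thesis using 1 ln_sym by auto
  qed
qed

lemma dep3:
  assumes "x\<noteq>y" "x\<in>E" "y\<in>E" "u \<in> ln x y" "v \<in> ln x y" "w \<in> ln x y"
    "u\<noteq>v" "u\<noteq>w" "v\<noteq>w"
  shows "\<not> indep {u,v,w}"
proof -
  have "ln u v = ln x y" using ln_eq2 assms by blast
  hence "w \<in> ln u v" using assms by simp
  thus ?thesis using ln_dep assms by blast
qed

lemma ln_no3:
  assumes "x\<noteq>y" "x\<in>E" "y\<in>E" "I \<subseteq> ln x y" "indep I"
  shows "card I \<le> 2"
proof (rule ccontr)
  assume "\<not> card I \<le> 2"
  hence "3 \<le> card I" by simp
  then obtain J where J: "J \<subseteq> I" "card J = 3" by (meson obtain_subset_with_card_n)
  then obtain u v w where J': "J = {u,v,w}" "u\<noteq>v" "v\<noteq>w" "u\<noteq>w" by (auto simp: card_3_iff)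
  have "indep J" using mono assms J by blast
  moreover have "\<not> indep {u,v,w}" using dep3[of x y u v w] assms J J' by auto
  ultimately show False using J' by simp
qed

lemma mrank_ge: "I \<subseteq> X \<Longrightarrow> indep I \<Longrightarrow> card I \<le> mrank indep X"
  unfolding mrank_def using Max_ge[OF finS] by blast

lemma mrank_ln:
  assumes "x\<noteq>y" "x\<in>E" "y\<in>E"
  shows "mrank indep (ln x y) = 2"
  unfolding mrank_def
proof (rule Max_eqI[OF finS])
  fix n assume "n \<in> {card I |I. I \<subseteq> ln x y \<and> indep I}"
  thus "n \<le> 2" using ln_no3 assms by blast
next
  have "{x,y} \<subseteq> ln x y" using ln_x ln_y assms by auto
  moreover have "indep {x,y}" using indep2 assms by auto
  moreover have "card {x,y} = 2" using assms by auto
  ultimately show "2 \<in> {card I |I. I \<subseteq> ln x y \<and> indep I}" by force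
qed

lemma line_ln:
  assumes "x\<noteq>y" "x\<in>E" "y\<in>E"
  shows "line E indep (ln x y)"
  unfolding line_def flat_def
proof (intro conjI ballI)
  show "ln x y \<subseteq> E" by (rule ln_E)
  show "mrank indep (ln x y) = 2" using mrank_ln assms .
  fix e assume e: "e \<in> E - ln x y"
  have "{x,y,e} \<subseteq> insert e (ln x y)" using ln_x ln_y assms by auto
  moreover have "indep {x,y,e}" using not_ln e by auto
  moreover have "e \<noteq> x" "e \<noteq> y" using assms e ln_x ln_y by auto
  moreover have "card {x,y,e} = 3" using assms calculation by auto
  ultimately have "3 \<le> mrank indep (insert e (ln x y))" using mrank_ge by metis
  thus "mrank indep (ln x y) < mrank indep (insert e (ln x y))" using mrank_ln assms by simp
qed

lemma circ_card: assumes "circuit E indep C" shows "card C = 3 \<or> card C = 4"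
proof -
  have fC: "finite C" using assms fin unfolding circuit_def by (meson finite_subset)
  have g: "card C \<ge> 3" using S assms unfolding simple_matroid_def by blast
  then obtain z where z: "z \<in> C" by fastforce
  have "indep (C - {z})" using assms z unfolding circuit_def by blast
  hence "card (C - {z}) \<le> 3" by (rule card_le3)
  hence "card C \<le> 4" using z fC by (simp add: card_Diff_singleton)
  thus ?thesis using g by linarith
qed

lemma circ_proper: assumes "circuit E indep C" "D \<subseteq> C" "D \<noteq> C" shows "indep D"
proof -
  obtain z where "z \<in> C" "z \<notin> D" using assms by blast
  hence "D \<subseteq> C - {z}" using assms by blast
  moreover have "indep (C - {z})" using assms \<open>z \<in> C\<close> unfolding circuit_def by blast
  ultimately show ?thesis using mono by blast
qed

lemma circ4:
  assumes "a\<in>E" "b\<in>E" "c\<in>E" "d\<in>E" "a\<noteq>b" "a\<noteq>c" "a\<noteq>d" "b\<noteq>c" "b\<noteq>d" "c\<noteq>d"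
    "indep {a,b,c}" "indep {a,b,d}" "indep {a,c,d}" "indep {b,c,d}"
  shows "circuit E indep {a,b,c,d} \<and> card {a,b,c,d} = 4"
proof -
  have c4: "card {a,b,c,d} = 4" using assms by auto
  have "\<not> indep {a,b,c,d}" using card_le3 c4 by fastforce
  moreover have "{a,b,c,d} - {a} = {b,c,d}" "{a,b,c,d} - {b} = {a,c,d}"
    "{a,b,c,d} - {c} = {a,b,d}" "{a,b,c,d} - {d} = {a,b,c}" using assms by auto
  ultimately show ?thesis unfolding circuit_def using assms c4 by auto
qed

lemma circ3:
  assumes "u\<in>E" "v\<in>E" "w\<in>E" "u\<noteq>v" "u\<noteq>w" "v\<noteq>w" "\<not> indep {u,v,w}"
  shows "circuit E indep {u,v,w}"
proof -
  have "{u,v,w} - {u} = {v,w}" "{u,v,w} - {v} = {u,w}" "{u,v,w} - {w} = {u,v}" using assms by auto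
  thus ?thesis unfolding circuit_def using assms indep2 by auto
qed

lemma circ_line3:
  assumes "x\<noteq>y" "x\<in>E" "y\<in>E" "circuit E indep C" "C \<subseteq> ln x y"
  shows "card C = 3"
proof (rule ccontr)
  assume "card C \<noteq> 3"
  hence c4: "card C = 4" using circ_card assms by blast
  then obtain z where z: "z \<in> C" by fastforce
  have "indep (C - {z})" using assms z unfolding circuit_def by blast
  hence "card (C - {z}) \<le> 2" using ln_no3 assms by blast
  moreover have "finite C" using c4 card.infinite by fastforce
  ultimately show False using c4 z by (simp add: card_Diff_singleton)
qed

lemma circ_int_le2:
  assumes "x\<noteq>y" "x\<in>E" "y\<in>E" "circuit E indep C" "card C = 4"
  shows "card (C \<inter> ln x y) \<le> 2"
proof -
  have "C \<inter> ln x y \<noteq> C" using circ_line3[of x y C] assms by auto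
  hence "indep (C \<inter> ln x y)" using circ_proper assms by blast
  thus ?thesis using ln_no3 assms by blast
qed

lemma restr_circ: "M \<subseteq> E \<Longrightarrow> circuit M (restr indep M) C \<longleftrightarrow> C \<subseteq> M \<and> circuit E indep C"
  unfolding circuit_def restr_def by auto

lemma two_in:
  assumes "p\<noteq>q" "p\<in>E" "q\<in>E" "s \<in> ln p q" "t \<in> ln p q" "s\<noteq>t" "r\<in>E" "\<not> indep {s,t,r}"
  shows "r \<in> ln p q"
  using in_ln[of r s t] ln_eq2[of p q s t] assms by auto

lemma card3_pt: assumes "card C = 3" "p \<in> C"
  shows "\<exists>u v. C = {p,u,v} \<and> u\<noteq>v \<and> u\<noteq>p \<and> v\<noteq>p"
proof -
  have "finite C" using assms card.infinite by fastforce
  hence "card (C - {p}) = 2" using assms by (simp add: card_Diff_singleton)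
  then obtain u v where "C - {p} = {u,v}" "u\<noteq>v" by (auto simp: card_2_iff)
  thus ?thesis using assms by blast
qed

lemma pc:
  assumes "p\<noteq>x" "p\<in>E" "x\<in>E" "y\<in>E" "y \<notin> ln p x" "E = ln p x \<union> ln p y"
  shows "parallel_connection_of_two_lines E indep p"
proof -
  define M1 where "M1 = ln p x"
  define M2 where "M2 = ln p y"
  have py: "p \<noteq> y" using assms ln_x by auto
  have M1E: "M1 \<subseteq> E" and M2E: "M2 \<subseteq> E" unfolding M1_def M2_def using ln_E by auto
  have pM1: "p \<in> M1" and pM2: "p \<in> M2" unfolding M1_def M2_def using ln_x assms by auto
  have int: "M1 \<inter> M2 = {p}"
  proof (rule ccontr)
    assume "M1 \<inter> M2 \<noteq> {p}"
    then obtain z where z: "z \<in> M1" "z \<in> M2" "z \<noteq> p" using pM1 pM2 by blast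
    have "ln p z = ln p x" using ln_eq[of p x z] z assms unfolding M1_def by auto
    moreover have "ln p z = ln p y" using ln_eq[of p y z] z assms py unfolding M2_def by auto
    ultimately have "y \<in> ln p x" using ln_y assms by auto
    thus False using assms by simp
  qed
  have L1: "line E indep M1" unfolding M1_def using line_ln assms by auto
  have L2: "line E indep M2" unfolding M2_def using line_ln assms py by auto
  have U: "M1 \<union> M2 = E" unfolding M1_def M2_def using assms by auto
  have "{C. circuit E indep C} = pc_circuits M1 (restr indep M1) M2 (restr indep M2) p"
  proof (rule set_eqI, rule iffI)
    fix C assume "C \<in> {C. circuit E indep C}"
    hence C: "circuit E indep C" by simp
    have CE: "C \<subseteq> E" using C unfolding circuit_def by blast
    have fC: "finite C" using CE fin by (meson finite_subset)
    show "C \<in> pc_circuits M1 (restr indep M1) M2 (restr indep M2) p"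
    proof (cases "card C = 3")
      case True
      then obtain u v w where uvw: "C = {u,v,w}" "u\<noteq>v" "v\<noteq>w" "u\<noteq>w" by (auto simp: card_3_iff)
      have d: "\<not> indep {u,v,w}" "\<not> indep {u,w,v}" "\<not> indep {v,w,u}"
        using C uvw unfolding circuit_def by (auto simp: insert_commute)
      have E3: "u \<in> E" "v \<in> E" "w \<in> E" using CE uvw by auto
      have k1: "\<And>a b c. a \<in> M1 \<Longrightarrow> b \<in> M1 \<Longrightarrow> a \<noteq> b \<Longrightarrow> c \<in> E \<Longrightarrow> \<not> indep {a,b,c} \<Longrightarrow> c \<in> M1"
        unfolding M1_def using two_in assms by blast
      have k2: "\<And>a b c. a \<in> M2 \<Longrightarrow> b \<in> M2 \<Longrightarrow> a \<noteq> b \<Longrightarrow> c \<in> E \<Longrightarrow> \<not> indep {a,b,c} \<Longrightarrow> c \<in> M2"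
        unfolding M2_def using two_in assms py by blast
      have mem: "u \<in> M1 \<or> u \<in> M2" "v \<in> M1 \<or> v \<in> M2" "w \<in> M1 \<or> w \<in> M2" using E3 U by auto
      have q1: "u \<in> M1 \<Longrightarrow> v \<in> M1 \<Longrightarrow> C \<subseteq> M1" using k1[OF _ _ uvw(2) E3(3) d(1)] uvw by auto
      have q2: "u \<in> M1 \<Longrightarrow> w \<in> M1 \<Longrightarrow> C \<subseteq> M1" using k1[OF _ _ uvw(4) E3(2) d(2)] uvw by auto
      have q3: "v \<in> M1 \<Longrightarrow> w \<in> M1 \<Longrightarrow> C \<subseteq> M1" using k1[OF _ _ uvw(3) E3(1) d(3)] uvw by auto
      have q4: "u \<in> M2 \<Longrightarrow> v \<in> M2 \<Longrightarrow> C \<subseteq> M2" using k2[OF _ _ uvw(2) E3(3) d(1)] uvw by auto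
      have q5: "u \<in> M2 \<Longrightarrow> w \<in> M2 \<Longrightarrow> C \<subseteq> M2" using k2[OF _ _ uvw(4) E3(2) d(2)] uvw by auto
      have q6: "v \<in> M2 \<Longrightarrow> w \<in> M2 \<Longrightarrow> C \<subseteq> M2" using k2[OF _ _ uvw(3) E3(1) d(3)] uvw by auto
      have "C \<subseteq> M1 \<or> C \<subseteq> M2" using mem q1 q2 q3 q4 q5 q6 by blast
      thus ?thesis unfolding pc_circuits_def using restr_circ M1E M2E C by blast
    next
      case False
      hence c4: "card C = 4" using circ_card C by blast
      have a1: "card (C \<inter> M1) \<le> 2" unfolding M1_def using circ_int_le2 assms C c4 by blast
      have a2: "card (C \<inter> M2) \<le> 2" unfolding M2_def using circ_int_le2 assms py C c4 by blast
      have un: "(C \<inter> M1) \<union> (C \<inter> M2) = C" using CE U by auto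
      have it: "(C \<inter> M1) \<inter> (C \<inter> M2) = C \<inter> {p}" using int by auto
      have eq: "card (C \<inter> M1) + card (C \<inter> M2) = card C + card (C \<inter> {p})"
        using card_Un_Int[of "C \<inter> M1" "C \<inter> M2"] fC un it by auto
      have pC: "p \<notin> C" using eq a1 a2 c4 by auto
      hence "card (C \<inter> M1) = 2" "card (C \<inter> M2) = 2" using eq a1 a2 c4 by auto
      then obtain x1 x2 y1 y2 where X: "C \<inter> M1 = {x1,x2}" "x1\<noteq>x2" and Y: "C \<inter> M2 = {y1,y2}" "y1\<noteq>y2"
        by (auto simp: card_2_iff)
      have xs: "x1 \<in> M1" "x2 \<in> M1" "x1 \<noteq> p" "x2 \<noteq> p" "x1 \<in> E" "x2 \<in> E" using X pC CE by auto
      have ys: "y1 \<in> M2" "y2 \<in> M2" "y1 \<noteq> p" "y2 \<noteq> p" "y1 \<in> E" "y2 \<in> E" using Y pC CE by auto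
      have c1: "circuit E indep {p,x1,x2}"
      proof -
        have "x1 \<in> ln p x" "x2 \<in> ln p x" "p \<in> ln p x" using xs pM1 unfolding M1_def by auto
        hence "\<not> indep {p,x1,x2}" using dep3[of p x p x1 x2] assms xs X(2) by metis
        thus ?thesis using circ3[of p x1 x2] assms xs X(2) by metis
      qed
      have c2: "circuit E indep {p,y1,y2}"
      proof -
        have "y1 \<in> ln p y" "y2 \<in> ln p y" "p \<in> ln p y" using ys pM2 unfolding M2_def by auto
        hence "\<not> indep {p,y1,y2}" using dep3[of p y p y1 y2] assms py ys Y(2) by metis
        thus ?thesis using circ3[of p y1 y2] assms ys Y(2) by metis
      qed
      have r1: "circuit M1 (restr indep M1) {p,x1,x2}" using restr_circ M1E c1 xs pM1 by auto
      have r2: "circuit M2 (restr indep M2) {p,y1,y2}" using restr_circ M2E c2 ys pM2 by auto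
      have "C = ({p,x1,x2} - {p}) \<union> ({p,y1,y2} - {p})" using X Y un xs ys by auto
      thus ?thesis unfolding pc_circuits_def using r1 r2 by blast
    qed
  next
    fix C assume "C \<in> pc_circuits M1 (restr indep M1) M2 (restr indep M2) p"
    then consider "circuit M1 (restr indep M1) C" | "circuit M2 (restr indep M2) C"
      | C1 C2 where "C = (C1 - {p}) \<union> (C2 - {p})" "circuit M1 (restr indep M1) C1"
         "circuit M2 (restr indep M2) C2" "p \<in> C1" "p \<in> C2"
      unfolding pc_circuits_def by blast
    thus "C \<in> {C. circuit E indep C}"
    proof cases
      case 1 thus ?thesis using restr_circ M1E by auto
    next
      case 2 thus ?thesis using restr_circ M2E by auto
    next
      case 3
      have C1: "circuit E indep C1" "C1 \<subseteq> M1" using 3 restr_circ M1E by auto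
      have C2: "circuit E indep C2" "C2 \<subseteq> M2" using 3 restr_circ M2E by auto
      have "card C1 = 3" using circ_line3[of p x C1] C1 assms unfolding M1_def by auto
      then obtain x1 x2 where X: "C1 = {p,x1,x2}" "x1\<noteq>x2" "x1\<noteq>p" "x2\<noteq>p"
        using card3_pt 3(4) by metis
      have "card C2 = 3" using circ_line3[of p y C2] C2 assms py unfolding M2_def by auto
      then obtain y1 y2 where Y: "C2 = {p,y1,y2}" "y1\<noteq>y2" "y1\<noteq>p" "y2\<noteq>p"
        using card3_pt 3(5) by metis
      have xs: "x1 \<in> M1" "x2 \<in> M1" "x1 \<in> E" "x2 \<in> E" using X C1 M1E by auto
      have ys: "y1 \<in> M2" "y2 \<in> M2" "y1 \<in> E" "y2 \<in> E" using Y C2 M2E by auto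
      have nx: "y1 \<notin> M1" "y2 \<notin> M1" using int ys Y by auto
      have ny: "x1 \<notin> M2" "x2 \<notin> M2" using int xs X by auto
      have l1: "ln x1 x2 = M1" unfolding M1_def using ln_eq2[of p x x1 x2] assms(1,2,3) xs(1,2) X(2) unfolding M1_def by metis
      have l2: "ln y1 y2 = M2" unfolding M2_def using ln_eq2[of p y y1 y2] assms(2,4) py ys(1,2) Y(2) unfolding M2_def by metis
      have i1: "indep {x1,x2,y1}" "indep {x1,x2,y2}" using not_ln l1 nx ys by auto
      have "indep {y1,y2,x1}" "indep {y1,y2,x2}" using not_ln l2 ny xs by auto
      hence i2: "indep {x1,y1,y2}" "indep {x2,y1,y2}" by (auto simp: insert_commute)
      have dd: "x1 \<noteq> y1" "x1 \<noteq> y2" "x2 \<noteq> y1" "x2 \<noteq> y2" using nx xs by auto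
      have "circuit E indep {x1,x2,y1,y2}" using circ4[OF xs(3,4) ys(3,4)] X Y dd i1 i2 by auto
      moreover have "C = {x1,x2,y1,y2}" using 3 X Y by auto
      ultimately show ?thesis by simp
    qed
  qed
  thus ?thesis unfolding parallel_connection_of_two_lines_def using L1 L2 int U by blast
qed

lemma ex_out: assumes "s\<noteq>t" "s\<in>E" "t\<in>E" shows "\<exists>c\<in>E. c \<notin> ln s t"
proof (rule ccontr)
  assume "\<not> ?thesis"
  hence sub: "E \<subseteq> ln s t" by blast
  obtain I where I: "I \<subseteq> E" "indep I" "card I = 3" using ex3 by blast
  have "card I \<le> 2" using ln_no3[OF assms] I sub by blast
  thus False using I by simp
qed

lemma good:
  assumes "a\<noteq>b" "a\<in>E" "b\<in>E" "d\<in>E" "e\<in>E" "d \<notin> ln a b" "e \<notin> ln a b" "d\<noteq>e"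
    "a \<notin> ln d e" "b \<notin> ln d e"
  shows "\<exists>C. circuit E indep C \<and> card C = 4 \<and> a \<in> C \<and> b \<in> C"
proof -
  have ab: "a \<in> ln a b" "b \<in> ln a b" using ln_x ln_y assms by auto
  have de: "d \<in> ln d e" "e \<in> ln d e" using ln_x ln_y assms by auto
  have dist: "a\<noteq>d" "a\<noteq>e" "b\<noteq>d" "b\<noteq>e" using ab assms by auto
  have i1: "indep {a,b,d}" "indep {a,b,e}" using not_ln assms by auto
  have "indep {d,e,a}" "indep {d,e,b}" using not_ln assms by auto
  hence i2: "indep {a,d,e}" "indep {b,d,e}" by (auto simp: insert_commute)
  have "circuit E indep {a,b,d,e} \<and> card {a,b,d,e} = 4"
    using circ4[of a b d e] assms dist i1 i2 by blast
  thus ?thesis by blast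
qed

lemma main_ne:
  assumes "a\<noteq>b" "a\<in>E" "b\<in>E"
  shows "(\<exists>C. circuit E indep C \<and> card C = 4 \<and> a \<in> C \<and> b \<in> C)
         \<or> parallel_connection_of_two_lines E indep a
         \<or> parallel_connection_of_two_lines E indep b"
proof -
  obtain c where c: "c \<in> E" "c \<notin> ln a b" using ex_out assms by blast
  have ca: "c \<noteq> a" "c \<noteq> b" using c ln_x ln_y assms by auto
  show ?thesis
  proof (cases "\<exists>d e. d\<in>E \<and> e\<in>E \<and> d \<notin> ln a b \<and> e \<notin> ln a b \<and> d\<noteq>e \<and> a \<notin> ln d e \<and> b \<notin> ln d e")
    case True thus ?thesis using good assms by blast
  next
    case False
    have cov: "d \<in> ln a c \<or> d \<in> ln b c" if d: "d \<in> E" "d \<notin> ln a b" for d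
    proof (cases "d = c")
      case True thus ?thesis using ln_y c by auto
    next
      case dc: False
      hence "a \<in> ln c d \<or> b \<in> ln c d" using False d c by blast
      moreover have "d \<in> ln c d" using ln_y d by auto
      moreover {
        assume "a \<in> ln c d"
        hence "ln c a = ln c d" using ln_eq[of c d a] c d dc ca by auto
      }
      moreover {
        assume "b \<in> ln c d"
        hence "ln c b = ln c d" using ln_eq[of c d b] c d dc ca by auto
      }
      ultimately show ?thesis using ln_sym by metis
    qed
    show ?thesis
    proof (cases "\<forall>d\<in>E. d \<notin> ln a b \<longrightarrow> d \<in> ln a c")
      case True
      hence "E = ln a b \<union> ln a c" using ln_E by blast
      hence "parallel_connection_of_two_lines E indep a" using pc[of a b c] assms c by blast
      thus ?thesis by blast
    next
      case F1: False
      show ?thesis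
      proof (cases "\<forall>d\<in>E. d \<notin> ln a b \<longrightarrow> d \<in> ln b c")
        case True
        hence "E = ln b a \<union> ln b c" using ln_E ln_sym by blast
        hence "parallel_connection_of_two_lines E indep b" using pc[of b a c] assms c ln_sym by metis
        thus ?thesis by blast
      next
        case F2: False
        obtain d where d: "d \<in> E" "d \<notin> ln a b" "d \<notin> ln a c" using F1 by blast
        obtain e where e: "e \<in> E" "e \<notin> ln a b" "e \<notin> ln b c" using F2 by blast
        have db: "d \<in> ln b c" using cov d by blast
        have ea: "e \<in> ln a c" using cov e by blast
        have de: "d \<noteq> e" using d ea by blast
        have dab: "d \<noteq> a" "d \<noteq> b" "e \<noteq> a" "e \<noteq> b" using d e ln_x ln_y assms by auto
        have na: "a \<notin> ln d e"
        proof
          assume "a \<in> ln d e"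
          hence "a \<in> ln e d" using ln_sym by simp
          hence 1: "ln e a = ln e d" using ln_eq[of e d a] e d de dab by auto
          have 2: "ln a e = ln a c" using ln_eq[of a c e] assms c ca ea dab by auto
          have "d \<in> ln e d" using ln_y d by auto
          hence "d \<in> ln a c" using 1 2 ln_sym by metis
          thus False using d by simp
        qed
        have nb: "b \<notin> ln d e"
        proof
          assume "b \<in> ln d e"
          hence 1: "ln d b = ln d e" using ln_eq[of d e b] e d de dab by auto
          have 2: "ln b d = ln b c" using ln_eq[of b c d] assms c ca db dab by auto
          have "e \<in> ln d e" using ln_y e by auto
          hence "e \<in> ln b c" using 1 2 ln_sym by metis
          thus False using e by simp
        qed
        show ?thesis using good[of a b d e] assms d e de na nb by blast
      qed
    qed
  qed
qed

lemma main_eq: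
  assumes conn: "connected_matroid E indep" and aE: "a\<in>E"
  shows "(\<exists>C. circuit E indep C \<and> card C = 4 \<and> a \<in> C)
         \<or> parallel_connection_of_two_lines E indep a"
proof -
  obtain I where I: "I \<subseteq> E" "indep I" "card I = 3" using ex3 by blast
  have "\<not> I \<subseteq> {a}" using I card_mono[of "{a}" I] by fastforce
  then obtain x where x: "x \<in> E" "x \<noteq> a" using I by blast
  obtain C where C: "circuit E indep C" "a \<in> C" "x \<in> C" using conn aE x unfolding connected_matroid_def by metis
  have CE: "C \<subseteq> E" using C unfolding circuit_def by blast
  have fC: "finite C" using CE fin by (meson finite_subset)
  show ?thesis
  proof (cases "card C = 4")
    case True thus ?thesis using C by blast
  next
    case False
    hence c3: "card C = 3" using circ_card C by blast
    have "card {a,x} = 2" using x by auto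
    hence "\<not> C \<subseteq> {a,x}" using c3 card_mono[of "{a,x}" C] by fastforce
    then obtain x' where x': "x' \<in> C" "x' \<noteq> a" "x' \<noteq> x" by blast
    have "{a,x,x'} \<subseteq> C" using C x' by auto
    moreover have "card {a,x,x'} = 3" using x x' by auto
    ultimately have "{a,x,x'} = C" using card_subset_eq[OF fC] c3 by metis
    hence "\<not> indep {a,x,x'}" using C unfolding circuit_def by blast
    hence x'l: "x' \<in> ln a x" using in_ln x' CE by blast
    have x'E: "x' \<in> E" using x' CE by auto
    obtain y where y: "y \<in> E" "y \<notin> ln a x" using ex_out[of a x] x aE by metis
    have ya: "y \<noteq> a" "y \<noteq> x" using y ln_x ln_y aE x by auto
    show ?thesis
    proof (cases "E = ln a x \<union> ln a y")
      case True thus ?thesis using pc[of a x y] x aE y by metis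
    next
      case False
      then obtain z where z: "z \<in> E" "z \<notin> ln a x" "z \<notin> ln a y" using ln_E by blast
      have zd: "z \<noteq> a" "z \<noteq> x" "z \<noteq> y" using z ln_x ln_y aE x y by auto
      have i1: "indep {a,x,y}" "indep {a,x,z}" "indep {a,y,z}" using not_ln y z by auto
      show ?thesis
      proof (cases "indep {x,y,z}")
        case True
        have "circuit E indep {a,x,y,z} \<and> card {a,x,y,z} = 4"
          using circ4[of a x y z] aE x y z zd ya i1 True by auto
        thus ?thesis by blast
      next
        case False
        hence zl: "z \<in> ln x y" using in_ln z by blast
        have lx': "ln a x' = ln a x" using ln_eq[of a x x'] x aE x'l x' by auto
        have j1: "indep {a,x',y}" "indep {a,x',z}" using not_ln y z lx' by auto
        have j2: "indep {x',y,z}"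
        proof (rule ccontr)
          assume "\<not> indep {x',y,z}"
          hence "\<not> indep {y,z,x'}" by (simp add: insert_commute)
          hence "x' \<in> ln y z" using in_ln x'E by blast
          moreover have "ln y z = ln y x" using ln_eq[of y x z] y x zd ya zl ln_sym by metis
          ultimately have "x' \<in> ln x y" using ln_sym by metis
          hence 1: "ln x x' = ln x y" using ln_eq[of x y x'] x y ya x' by metis
          have 2: "ln x x' = ln x a" using ln_eq[of x a x'] x aE x' x'l ln_sym by metis
          have "y \<in> ln x y" using ln_y y by auto
          hence "y \<in> ln a x" using 1 2 ln_sym by metis
          thus False using y by simp
        qed
        have dd: "x' \<noteq> y" "x' \<noteq> z" using x'l y z by auto
        have "circuit E indep {a,x',y,z} \<and> card {a,x',y,z} = 4"
          using circ4[of a x' y z] aE x'E y z zd ya x' dd i1 j1 j2 by auto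
        thus ?thesis by blast
      qed
    qed
  qed
qed

end

theorem lemma3p1:
  fixes E :: "'a set" and indep :: "'a set \<Rightarrow> bool" and a b :: 'a
  assumes "matroid E indep"
    and "connected_matroid E indep"
    and "simple_matroid E indep"
    and "mrank indep E = 3"
    and "a \<in> E" and "b \<in> E"
  shows "(\<exists>C. circuit E indep C \<and> card C = 4 \<and> a \<in> C \<and> b \<in> C)
         \<or> parallel_connection_of_two_lines E indep a
         \<or> parallel_connection_of_two_lines E indep b"
proof -
  interpret rk3 E indep using assms(1,3,4) by unfold_locales
  show ?thesis
  proof (cases "a = b")
    case True thus ?thesis using main_eq[OF assms(2,5)] by blast
  next
    case False thus ?thesis using main_ne assms by blast
  qed
qed

end
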